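(* Let $\mathcal{T}$ be an MPQ-tree of an interval graph $G=(V,E)$, let $(x,y)\in E$ with $x$ over $y$ and $node(x)\neq node(y)$, and suppose the $\langle x,y\rangle$-tree-path is almost rotable and starts in a central section $S_a$ of the Q-node $node(x)$, whose sections are $S_1,\dots,S_k$. Suppose $y$ has no neighbour in $V_a\setminus\{y\}$ (the vertex set of the subtree $T_a$), and at least one of the following holds: (1) there is $b$ with $1<b\le l(x)$ such that $S_a\setminus\{x\}\subseteq S_b$ and $S_{b-1}\cap S_b\subseteq S_a$; (2) there is $b$ with $r(x)\le b<k$ such that $S_a\setminus\{x\}\subseteq S_b$ and $S_b\cap S_{b+1}\subseteq S_a$; (3) $S_a\setminus\{x\}\subseteq S_1$; (4) $S_a\setminus\{x\}\subseteq S_k$. Then $(x,y)$ is an interval edge.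
   Context: Graphs are finite and simple; for $G=(V,E)$ and $e\in E$, $G-e=(V,E\setminus\{e\})$. An edge $(x,y)\in E$ of an interval graph $G$ is an interval edge if $G-(x,y)$ is an interval graph. An MPQ-tree of an interval graph $G=(V,E)$, $V=\{1,\dots,n\}$, is a rooted plane tree whose nodes are P-nodes and Q-nodes. Each P-node carries a (possibly empty) set of vertices. A Q-node has $k\ge 3$ ordered positions $1,\dots,k$; position $i$ carries a set $S_i\subseteq V$ (the $i$-th section) and a child subtree $T_i$, which may be empty. Every vertex $v$ is assigned to exactly one node $node(v)$: either $v$ lies in the set of the P-node $node(v)$, or $node(v)$ is a Q-node and $v$ lies exactly in the sections $S_{l(v)},\dots,S_{r(v)}$ of it, with $l(v)<r(v)$. For a node with child subtrees $T_1,\dots,T_k$, $V_i$ denotes the set of vertices assigned to nodes of $T_i$ ($V_i=\emptyset$ if $T_i$ is empty). The maximal cliques of $G$ are in bijection with the descending paths from the root which at a P-node continue into one of its children (stopping if there is none) and at a Q-node choose a position $i$ and continue into $T_i$ (stopping if $T_i$ is empty); the clique is the union of the sets of the visited P-nodes and the chosen sections. Reading these cliques left to right gives a linear order of the maximal cliques, and the orders obtained this way after arbitrarily permuting children of P-nodes and reversing the positions of Q-nodes are exactly the orders of the maximal cliques of $G$ in which the cliques containing any fixed vertex are consecutive. Moreover, for every Q-node with sections $S_1,\dots,S_k$: (a) $V_1\neq\emptyset$ and $V_k\ne\emptyset$; (b) $S_1\subseteq S_2$ and $S_k\subseteq S_{k-1}$; (c) $S_{i-1}\cap S_i\neq\emptyset$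 for $2\le i\le k$; (d) $S_{i-1}\neq S_i$ for $2\le i\le k$; (e) $(S_i\cap S_{i+1})\setminus S_1\neq\emptyset$ and $(S_{i-1}\cap S_i)\setminus S_k\neq\emptyset$ for $2\le i\le k-1$; (f) $(S_{i-1}\cup V_{i-1})\setminus S_i\neq\emptyset$ and $(S_i\cup V_i)\setminus S_{i-1}\neq\emptyset$ for $2\le i\le k$; and further (g) no empty P-node has an empty P-node as its parent, (h) no P-node has exactly one child whose root is a P-node, (i) every child subtree of a P-node is nonempty. We say $x$ is over $y$ if $node(x)$ is the lowest common ancestor of $node(x)$ and $node(y)$ in $\mathcal{T}$. For $x$ over $y$ with $node(x)\ne node(y)$, the $\langle x,y\rangle$-tree-path is the tree path $node(x)=n_1,n_2,\dots,n_t=node(y)$. For a Q-node with sections $S_1,\dots,S_k$, section $S_a$ is central if $1<a<k$, and for a vertex $v$ of that Q-node it is $v$-central if $l(v)<a<r(v)$ and $v$-non-central if $a\in\{l(v),r(v)\}$. The path goes through a central section if for some $1<i<t$, $n_i$ is a Q-node and $n_{i+1}$ lies in the subtree $T_a$ of a central section $S_a$ of $n_i$. The path starts in a central (resp. non-central) section $S_a$ if $n_1$ is a Q-node and $n_2$ lies in the subtree $T_a$ where $S_a$ is an $x$-central (resp. $x$-non-central) section of $n_1$. It starts in a P-node if $n_1$ is a P-node, and ends in a P-node (resp. Q-node) if $n_t$ is a P-node (resp. Q-node). The path is almost rotable if it does not go through a central section and $n_t$ is a P-node that is a leaf of $\mathcal{T}$; it is rotable if it is almost rotable and it either starts in a P-node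 or starts in a non-central section. *)

theory Defs
  imports Complex_Main "HOL-Library.Multiset"
begin

text \<open>A finite simple graph G = (V,E): edges are two-element subsets of V.
  The edge (x,y) is represented by the set {x,y}; G - (x,y) is (V, E - {{x,y}}).\<close>

definition simple_graph :: "nat set \<Rightarrow> nat set set \<Rightarrow> bool" where
  "simple_graph V E \<longleftrightarrow> finite V \<and>
     (\<forall>e\<in>E. \<exists>u v. e = {u, v} \<and> u \<noteq> v \<and> u \<in> V \<and> v \<in> V)"

definition interval_graph :: "nat set \<Rightarrow> nat set set \<Rightarrow> bool" where
  "interval_graph V E \<longleftrightarrow> simple_graph V E \<and>
     (\<exists>I :: nat \<Rightarrow> real \<times> real.
        (\<forall>v\<in>V. fst (I v) \<le> snd (I v)) \<and>
        (\<forall>u\<in>V. \<forall>v\<in>V. u \<noteq> v \<longrightarrow>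
            ({u, v} \<in> E \<longleftrightarrow> max (fst (I u)) (fst (I v)) \<le> min (snd (I u)) (snd (I v)))))"

definition is_clique :: "nat set \<Rightarrow> nat set set \<Rightarrow> nat set \<Rightarrow> bool" where
  "is_clique V E C \<longleftrightarrow> C \<subseteq> V \<and> (\<forall>u\<in>C. \<forall>v\<in>C. u \<noteq> v \<longrightarrow> {u, v} \<in> E)"

definition max_cliques :: "nat set \<Rightarrow> nat set set \<Rightarrow> nat set set" where
  "max_cliques V E = {C. is_clique V E C \<and> (\<forall>D. is_clique V E D \<and> C \<subseteq> D \<longrightarrow> D = C)}"

text \<open>A P-node carries a vertex set and the (ordered) list of its child subtrees
  (every child subtree of a P-node is nonempty by construction).
  A Q-node carries the list of its positions; position i carries the section S_i
  and a possibly empty child subtree T_i (None = empty).\<close>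

datatype mpq = PNode "nat set" "mpq list" | QNode "(nat set \<times> mpq option) list"

text \<open>Nodes are identified by their positions (lists of 0-based child indices).\<close>

primrec subtree :: "nat list \<Rightarrow> mpq \<Rightarrow> mpq option" where
  "subtree [] t = Some t"
| "subtree (i # p) t =
     (case t of
        PNode A cs \<Rightarrow> (if i < length cs then subtree p (cs ! i) else None)
      | QNode ss \<Rightarrow> (if i < length ss then
                       (case snd (ss ! i) of None \<Rightarrow> None | Some c \<Rightarrow> subtree p c)
                     else None))"

definition positions :: "mpq \<Rightarrow> nat list set" where
  "positions T = {p. subtree p T \<noteq> None}"

definition node_at :: "mpq \<Rightarrow> nat list \<Rightarrow> mpq" where
  "node_at T p = the (subtree p T)"

fun node_vs :: "mpq \<Rightarrow> nat set" where
  "node_vs (PNode A cs) = A"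
| "node_vs (QNode ss) = \<Union> (set (map fst ss))"

definition all_verts :: "mpq \<Rightarrow> nat set" where
  "all_verts T = \<Union> {node_vs (node_at T p) | p. p \<in> positions T}"

definition subverts :: "mpq option \<Rightarrow> nat set" where
  "subverts c = (case c of None \<Rightarrow> {} | Some t \<Rightarrow> all_verts t)"

text \<open>1-based access to the sections S_i, subtrees T_i and vertex sets V_i of a Q-node.\<close>

definition sec :: "(nat set \<times> mpq option) list \<Rightarrow> nat \<Rightarrow> nat set" where
  "sec ss i = fst (ss ! (i - 1))"

definition Vsub :: "(nat set \<times> mpq option) list \<Rightarrow> nat \<Rightarrow> nat set" where
  "Vsub ss i = subverts (snd (ss ! (i - 1)))"

text \<open>l(v) and r(v), 1-based.\<close>

definition lidx :: "(nat set \<times> mpq option) list \<Rightarrow> nat \<Rightarrow> nat" where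
  "lidx ss v = (LEAST i. 1 \<le> i \<and> i \<le> length ss \<and> v \<in> sec ss i)"

definition ridx :: "(nat set \<times> mpq option) list \<Rightarrow> nat \<Rightarrow> nat" where
  "ridx ss v = (GREATEST i. 1 \<le> i \<and> i \<le> length ss \<and> v \<in> sec ss i)"

text \<open>The maximal cliques along descending paths, read from left to right.\<close>

fun cliques :: "mpq \<Rightarrow> nat set list" where
  "cliques (PNode A cs) =
     (if cs = [] then [A] else concat (map (\<lambda>c. map ((\<union>) A) (cliques c)) cs))"
| "cliques (QNode ss) =
     concat (map (\<lambda>sc. case snd sc of None \<Rightarrow> [fst sc]
                                 | Some t \<Rightarrow> map ((\<union>) (fst sc)) (cliques t)) ss)"

inductive equiv_tree :: "mpq \<Rightarrow> mpq \<Rightarrow> bool" where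
  eqP: "list_all2 equiv_tree cs ds \<Longrightarrow> mset ds = mset es \<Longrightarrow>
        equiv_tree (PNode A cs) (PNode A es)"
| eqQ: "list_all2 (\<lambda>sc sd. fst sc = fst sd \<and> rel_option equiv_tree (snd sc) (snd sd)) ss ts \<Longrightarrow>
        equiv_tree (QNode ss) (QNode (if b then rev ts else ts))"
monos list_all2_mono option.rel_mono

definition consecutive_clique_order :: "nat set \<Rightarrow> nat set set \<Rightarrow> nat set list \<Rightarrow> bool" where
  "consecutive_clique_order V E L \<longleftrightarrow> distinct L \<and> set L = max_cliques V E \<and>
     (\<forall>v i j k. i \<le> j \<and> j \<le> k \<and> k < length L \<and> v \<in> L ! i \<and> v \<in> L ! k \<longrightarrow> v \<in> L ! j)"

definition Q_node_ok :: "(nat set \<times> mpq option) list \<Rightarrow> bool" where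
  "Q_node_ok ss \<longleftrightarrow> (let k = length ss; S = sec ss; W = Vsub ss in
     k \<ge> 3 \<and>
     \<comment> \<open>(a)\<close> W 1 \<noteq> {} \<and> W k \<noteq> {} \<and>
     \<comment> \<open>(b)\<close> S 1 \<subseteq> S 2 \<and> S k \<subseteq> S (k - 1) \<and>
     \<comment> \<open>(c),(d)\<close> (\<forall>i. 2 \<le> i \<and> i \<le> k \<longrightarrow> S (i - 1) \<inter> S i \<noteq> {} \<and> S (i - 1) \<noteq> S i) \<and>
     \<comment> \<open>(e)\<close> (\<forall>i. 2 \<le> i \<and> i \<le> k - 1 \<longrightarrow>
                (S i \<inter> S (i + 1)) - S 1 \<noteq> {} \<and> (S (i - 1) \<inter> S i) - S k \<noteq> {}) \<and>
     \<comment> \<open>(f)\<close> (\<forall>i. 2 \<le> i \<and> i \<le> k \<longrightarrow>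
                (S (i - 1) \<union> W (i - 1)) - S i \<noteq> {} \<and> (S i \<union> W i) - S (i - 1) \<noteq> {}))"

definition mpq_tree_of :: "nat set \<Rightarrow> nat set set \<Rightarrow> mpq \<Rightarrow> bool" where
  "mpq_tree_of V E T \<longleftrightarrow>
     \<comment> \<open>vertex assignment\<close>
     all_verts T = V \<and>
     (\<forall>v\<in>V. \<exists>!p. p \<in> positions T \<and> v \<in> node_vs (node_at T p)) \<and>
     (\<forall>p ss. p \<in> positions T \<and> node_at T p = QNode ss \<longrightarrow>
        length ss \<ge> 3 \<and>
        (\<forall>v \<in> node_vs (QNode ss). \<exists>l r. 1 \<le> l \<and> l < r \<and> r \<le> length ss \<and>
            (\<forall>i. 1 \<le> i \<and> i \<le> length ss \<longrightarrow> (v \<in> sec ss i \<longleftrightarrow> l \<le> i \<and> i \<le> r)))) \<and>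
     \<comment> \<open>maximal cliques in bijection with the descending paths\<close>
     distinct (cliques T) \<and> set (cliques T) = max_cliques V E \<and>
     \<comment> \<open>the clique orders of equivalent trees are exactly the consecutive orders\<close>
     {cliques T' | T'. equiv_tree T T'} = {L. consecutive_clique_order V E L} \<and>
     \<comment> \<open>(a)--(f)\<close>
     (\<forall>p ss. p \<in> positions T \<and> node_at T p = QNode ss \<longrightarrow> Q_node_ok ss) \<and>
     \<comment> \<open>(g)\<close>
     (\<forall>p i cs ds. p \<in> positions T \<and> (p @ [i]) \<in> positions T \<and>
        node_at T p = PNode {} cs \<longrightarrow> node_at T (p @ [i]) \<noteq> PNode {} ds) \<and>
     \<comment> \<open>(h)\<close>
     (\<forall>p A c B ds. p \<in> positions T \<and> node_at T p = PNode A [c] \<longrightarrow> c \<noteq> PNode B ds)"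

definition node :: "mpq \<Rightarrow> nat \<Rightarrow> nat list" where
  "node T v = (THE p. p \<in> positions T \<and> v \<in> node_vs (node_at T p))"

text \<open>x is over y: node(x) is the lowest common ancestor of node(x) and node(y),
  i.e. node(x) is an ancestor-or-self (prefix) of node(y).\<close>

definition over :: "mpq \<Rightarrow> nat \<Rightarrow> nat \<Rightarrow> bool" where
  "over T x y \<longleftrightarrow> (\<exists>q. node T y = node T x @ q)"

text \<open>The <x,y>-tree-path is n_m = node_at T (take m (node T y)) for
  length (node T x) \<le> m \<le> length (node T y).\<close>

definition almost_rotable :: "mpq \<Rightarrow> nat \<Rightarrow> nat \<Rightarrow> bool" where
  "almost_rotable T x y \<longleftrightarrow>
     (let px = node T x; py = node T y in
       (\<forall>m. length px < m \<and> m < length py \<longrightarrow>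
          (case node_at T (take m py) of
             QNode ss \<Rightarrow> \<not> (1 < Suc (py ! m) \<and> Suc (py ! m) < length ss)
           | PNode _ _ \<Rightarrow> True)) \<and>
       (\<exists>A. node_at T py = PNode A []))"

text \<open>The path starts in the x-central section S_a (1-based a) of the Q-node node(x).\<close>

definition starts_in_central :: "mpq \<Rightarrow> nat \<Rightarrow> nat \<Rightarrow> nat \<Rightarrow> bool" where
  "starts_in_central T x y a \<longleftrightarrow>
     (\<exists>ss. node_at T (node T x) = QNode ss \<and>
        a = Suc (node T y ! length (node T x)) \<and>
        lidx ss x < a \<and> a < ridx ss x)"

end

theory Submission
  imports Defs
begin


definition consec :: "nat set list \<Rightarrow> bool" where
 "consec L \<longleftrightarrow> (\<forall>v i j k. i \<le> j \<and> j \<le> k \<and> k < length L \<and> v \<in> L!i \<and> v \<in> L!k \<longrightarrow> v \<in> L!j)"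

lemma interval_from_list:
  assumes sg: "simple_graph V E'"
   and cons: "consec L"
   and cl: "\<forall>C\<in>set L. C \<subseteq> V \<and> (\<forall>u\<in>C. \<forall>v\<in>C. u \<noteq> v \<longrightarrow> {u,v} \<in> E')"
   and cov: "\<forall>v\<in>V. \<exists>C\<in>set L. v \<in> C"
   and ecov: "\<forall>u\<in>V. \<forall>v\<in>V. u\<noteq>v \<longrightarrow> {u,v} \<in> E' \<longrightarrow> (\<exists>C\<in>set L. u \<in> C \<and> v \<in> C)"
  shows "interval_graph V E'"
proof -
  define S where "S v = {i. i < length L \<and> v \<in> L!i}" for v
  define lo where "lo v = Min (S v)" for v
  define hi where "hi v = Max (S v)" for v
  have fin: "finite (S v)" for v unfolding S_def by simp
  have ne: "S v \<noteq> {}" if vV: "v \<in> V" for v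
  proof -
    obtain C where "C \<in> set L" "v \<in> C" using bspec[OF cov vV] by blast
    then obtain i where "i < length L" "L!i = C" by (metis in_set_conv_nth)
    then have "i \<in> S v" using \<open>v \<in> C\<close> unfolding S_def by simp
    then show ?thesis by auto
  qed
  have loS: "lo v \<in> S v" and hiS: "hi v \<in> S v" and lh: "lo v \<le> hi v"
     and bnd: "\<And>j. j \<in> S v \<Longrightarrow> lo v \<le> j \<and> j \<le> hi v" if "v \<in> V" for v
    using fin ne[OF that] unfolding lo_def hi_def by auto
  have cL: "\<And>w i j k. i \<le> j \<Longrightarrow> j \<le> k \<Longrightarrow> k < length L \<Longrightarrow> w \<in> L!i \<Longrightarrow> w \<in> L!k \<Longrightarrow> w \<in> L!j"
    using cons unfolding consec_def by blast
  show ?thesis unfolding interval_graph_def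
  proof (intro conjI exI[of _ "\<lambda>v. (real (lo v), real (hi v))"] ballI impI)
    show "simple_graph V E'" by fact
    fix v assume "v \<in> V" then show "fst (real (lo v), real (hi v)) \<le> snd (real (lo v), real (hi v))"
      using lh by simp
  next
    fix u v assume u: "u \<in> V" and v: "v \<in> V" and uv: "u \<noteq> v"
    show "({u, v} \<in> E') = (max (fst (real (lo u), real (hi u))) (fst (real (lo v), real (hi v)))
          \<le> min (snd (real (lo u), real (hi u))) (snd (real (lo v), real (hi v))))"
    proof
      assume "{u,v} \<in> E'"
      then obtain C where "C \<in> set L" "u \<in> C" "v \<in> C" using ecov u v uv by blast
      then obtain j where j: "j < length L" "L!j = C" by (metis in_set_conv_nth)
      have "j \<in> S u" "j \<in> S v" using j \<open>u\<in>C\<close> \<open>v\<in>C\<close> unfolding S_def by auto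
      then have "lo u \<le> j \<and> j \<le> hi u" "lo v \<le> j \<and> j \<le> hi v" using bnd[OF u] bnd[OF v] by blast+
      then show "max (fst (real (lo u), real (hi u))) (fst (real (lo v), real (hi v)))
          \<le> min (snd (real (lo u), real (hi u))) (snd (real (lo v), real (hi v)))"
        by simp
    next
      assume "max (fst (real (lo u), real (hi u))) (fst (real (lo v), real (hi v)))
          \<le> min (snd (real (lo u), real (hi u))) (snd (real (lo v), real (hi v)))"
      then have h: "max (lo u) (lo v) \<le> min (hi u) (hi v)" by simp
      define j where "j = max (lo u) (lo v)"
      have "u \<in> L!j"
        apply (rule cL[of "lo u" j "hi u"])
        using loS[OF u] hiS[OF u] h unfolding S_def j_def by auto
      moreover have "v \<in> L!j"
        apply (rule cL[of "lo v" j "hi v"])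
        using loS[OF v] hiS[OF v] h unfolding S_def j_def by auto
      moreover have "j < length L" using hiS[OF u] h unfolding S_def j_def by auto
      ultimately show "{u,v} \<in> E'" using cl uv by (meson nth_mem)
    qed
  qed
qed

lemma consec_insert:
  assumes c: "consec (A @ B)"
   and h1: "A \<noteq> [] \<Longrightarrow> B \<noteq> [] \<Longrightarrow> last A \<inter> hd B \<subseteq> insert y D"
   and h2: "(B \<noteq> [] \<and> D - {y} \<subseteq> hd B) \<or> (A \<noteq> [] \<and> D - {y} \<subseteq> last A)"
  shows "consec (map (\<lambda>C. C - {y}) A @ [D] @ map (\<lambda>C. C - {y}) B)"
proof -
  define L where "L = A @ B"
  define n where "n = length A"
  define g where "g i = (if i < n then L!i - {y} else if i = n then D else L!(i-1) - {y})" for i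
  have gi: "(map (\<lambda>C. C - {y}) A @ [D] @ map (\<lambda>C. C - {y}) B) ! i = g i"
    if "i < Suc (length L)" for i
    using that unfolding g_def L_def n_def by (auto simp: nth_append nth_Cons' )
  have len: "length (map (\<lambda>C. C - {y}) A @ [D] @ map (\<lambda>C. C - {y}) B) = Suc (length L)"
    unfolding L_def by simp
  have lastA: "last A = L!(n-1)" if "A \<noteq> []" using that unfolding L_def n_def
    by (simp add: last_conv_nth nth_append)
  have hdB: "hd B = L!n" if "B \<noteq> []" using that unfolding L_def n_def
    by (simp add: hd_conv_nth nth_append)
  have cL: "\<And>v i j k. i \<le> j \<Longrightarrow> j \<le> k \<Longrightarrow> k < length L \<Longrightarrow> v \<in> L!i \<Longrightarrow> v \<in> L!k \<Longrightarrow> v \<in> L!j"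
    using c unfolding consec_def L_def by blast
  have lenL: "length L = n + length B" unfolding L_def n_def by simp
  show ?thesis unfolding consec_def len
  proof (intro allI impI, elim conjE)
    fix v i j k assume ij: "i \<le> j" and jk: "j \<le> k" and kl: "k < Suc (length L)"
      and vi: "v \<in> (map (\<lambda>C. C - {y}) A @ [D] @ map (\<lambda>C. C - {y}) B) ! i"
      and vk: "v \<in> (map (\<lambda>C. C - {y}) A @ [D] @ map (\<lambda>C. C - {y}) B) ! k"
    have vi': "v \<in> g i" using vi gi[of i] ij jk kl by simp
    have vk': "v \<in> g k" using vk gi[of k] kl by simp
    have "v \<in> g j"
    proof (cases "v = y")
      case True
      then have "i = n" "k = n" using vi' vk' unfolding g_def by (auto split: if_splits)
      then show ?thesis using ij jk vi' by simp
    next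
      case vy: False
      show ?thesis
      proof (cases "j = n")
        case jn: True
        show ?thesis
        proof (cases "i = n \<or> k = n")
          case True then show ?thesis using vi' vk' jn by auto
        next
          case False
          then have "i < n" "k > n" using ij jk jn by auto
          then have a: "v \<in> L!i" "v \<in> L!(k-1)" using vi' vk' unfolding g_def by auto
          have "A \<noteq> []" "B \<noteq> []" using \<open>i<n\<close> \<open>k>n\<close> kl lenL unfolding n_def by auto
          have "v \<in> L!(n-1)" using cL[OF _ _ _ a] \<open>i<n\<close> \<open>k>n\<close> kl by auto
          moreover have "v \<in> L!n" using cL[OF _ _ _ a] \<open>i<n\<close> \<open>k>n\<close> kl by auto
          ultimately show ?thesis using h1[OF \<open>A\<noteq>[]\<close> \<open>B\<noteq>[]\<close>] lastA hdB \<open>A\<noteq>[]\<close> \<open>B\<noteq>[]\<close> jn vy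
            unfolding g_def by auto
        qed
      next
        case jn: False
        show ?thesis
        proof (cases "j < n")
          case True
          then have vi2: "v \<in> L!i" using vi' ij unfolding g_def by auto
          have "v \<in> L!j"
          proof (cases "k < n")
            case True then show ?thesis using cL[OF ij jk] vi2 vk' lenL unfolding g_def by auto
          next
            case False
            show ?thesis
            proof (cases "k = n")
              case True
              then have "v \<in> D" using vk' unfolding g_def by auto
              then have "v \<in> L!n \<and> B \<noteq> [] \<or> v \<in> L!(n-1)" using h2 vy lastA hdB by auto
              then show ?thesis
              proof
                assume "v \<in> L!n \<and> B \<noteq> []" then show ?thesis
                  using cL[of i j n v] vi2 ij \<open>j<n\<close> lenL by auto
              next
                assume "v \<in> L!(n-1)" then show ?thesis
                  using cL[of i j "n-1" v] vi2 ij \<open>j<n\<close> lenL by auto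
              qed
            next
              case False
              then have "v \<in> L!(k-1)" using vk' \<open>\<not> k < n\<close> unfolding g_def by auto
              then show ?thesis using cL[of i j "k-1" v] vi2 ij \<open>j<n\<close> \<open>\<not> k<n\<close> False kl by auto
            qed
          qed
          then show ?thesis using True vy unfolding g_def by auto
        next
          case False
          then have "j > n" using jn by auto
          then have vk2: "v \<in> L!(k-1)" using vk' jk unfolding g_def by auto
          have "v \<in> L!(j-1)"
          proof (cases "i > n")
            case True then show ?thesis using cL[of "i-1" "j-1" "k-1" v] vk2 vi' ij jk kl
              unfolding g_def by auto
          next
            case False
            show ?thesis
            proof (cases "i = n")
              case True
              then have "v \<in> D" using vi' unfolding g_def by auto
              then have "v \<in> L!n \<or> v \<in> L!(n-1) \<and> A \<noteq> []" using h2 vy lastA hdB by auto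
              then show ?thesis
              proof
                assume "v \<in> L!n" then show ?thesis
                  using cL[of n "j-1" "k-1" v] vk2 jk \<open>j>n\<close> kl by auto
              next
                assume "v \<in> L!(n-1) \<and> A \<noteq> []" then show ?thesis
                  using cL[of "n-1" "j-1" "k-1" v] vk2 jk \<open>j>n\<close> kl by auto
              qed
            next
              case False
              then have "v \<in> L!i" using vi' \<open>\<not> i > n\<close> unfolding g_def by auto
              then show ?thesis using cL[of i "j-1" "k-1" v] vk2 ij jk \<open>j>n\<close> \<open>\<not> i>n\<close> kl by auto
            qed
          qed
          then show ?thesis using \<open>j>n\<close> vy unfolding g_def by auto
        qed
      qed
    qed
    then show "v \<in> (map (\<lambda>C. C - {y}) A @ [D] @ map (\<lambda>C. C - {y}) B) ! j"
      using gi[of j] jk kl by simp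
  qed
qed

definition blk :: "nat set \<times> mpq option \<Rightarrow> nat set list" where
 "blk sc = (case snd sc of None \<Rightarrow> [fst sc] | Some t \<Rightarrow> map ((\<union>) (fst sc)) (cliques t))"

lemma cliques_Q: "cliques (QNode ss) = concat (map blk ss)"
  by (simp add: blk_def[abs_def])

declare cliques.simps(2)[simp del]
declare cliques_Q[simp]

lemma subtree_append:
  "subtree (p @ q) t = (case subtree p t of None \<Rightarrow> None | Some s \<Rightarrow> subtree q s)"
  by (induction p arbitrary: t) (auto split: mpq.splits option.splits)

lemma pos_Nil[simp]: "[] \<in> positions t" and node_at_Nil[simp]: "node_at t [] = t"
  by (auto simp: positions_def node_at_def)

lemma pos_P: "(i # q \<in> positions (PNode A cs)) = (i < length cs \<and> q \<in> positions (cs!i))"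
  by (simp add: positions_def)

lemma node_at_P: "i < length cs \<Longrightarrow> node_at (PNode A cs) (i # q) = node_at (cs!i) q"
  by (simp add: node_at_def)

lemma pos_Q: "(i # q \<in> positions (QNode ss)) = (i < length ss \<and> (\<exists>c. snd (ss!i) = Some c \<and> q \<in> positions c))"
  by (auto simp: positions_def split: option.splits)

lemma node_at_Q: "i < length ss \<Longrightarrow> snd (ss!i) = Some c \<Longrightarrow> node_at (QNode ss) (i # q) = node_at c q"
  by (simp add: node_at_def)

lemma pos_app: "p \<in> positions t \<Longrightarrow> (p @ q \<in> positions t) = (q \<in> positions (node_at t p))"
  by (auto simp: positions_def node_at_def subtree_append split: option.splits)

lemma node_at_app: "p \<in> positions t \<Longrightarrow> node_at t (p @ q) = node_at (node_at t p) q"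
  by (auto simp: positions_def node_at_def subtree_append split: option.splits)

lemma prov: "C \<in> set (cliques t) \<Longrightarrow> v \<in> C \<Longrightarrow> \<exists>q \<in> positions t. v \<in> node_vs (node_at t q)"
proof (induction t arbitrary: C rule: mpq.induct)
  case (PNode A cs)
  show ?case
  proof (cases "cs = []")
    case True then show ?thesis using PNode.prems by (intro bexI[of _ "[]"]) auto
  next
    case False
    then obtain c C' where c: "c \<in> set cs" "C' \<in> set (cliques c)" "C = A \<union> C'"
      using PNode.prems(1) by auto
    show ?thesis
    proof (cases "v \<in> A")
      case True then show ?thesis by (intro bexI[of _ "[]"]) auto
    next
      case False
      then have "v \<in> C'" using c PNode.prems by auto
      from PNode.IH[OF c(1) c(2) this] obtain q where q: "q \<in> positions c" "v \<in> node_vs (node_at c q)" by blast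
      from c(1) obtain i where i: "i < length cs" "cs!i = c" by (metis in_set_conv_nth)
      show ?thesis
        by (rule bexI[of _ "i # q"]) (use q i in \<open>simp_all add: pos_P node_at_P\<close>)
    qed
  qed
next
  case (QNode ss)
  from QNode.prems(1) obtain sc where sc: "sc \<in> set ss" "C \<in> set (blk sc)"
    by (auto simp: cliques_Q)
  from sc(1) obtain i where i: "i < length ss" "ss!i = sc" by (metis in_set_conv_nth)
  show ?case
  proof (cases "snd sc")
    case None
    then have "C = fst sc" using sc by (simp add: blk_def)
    then show ?thesis using QNode.prems(2) sc(1) by (intro bexI[of _ "[]"]) auto
  next
    case (Some c)
    then obtain C' where C': "C' \<in> set (cliques c)" "C = fst sc \<union> C'" using sc by (auto simp: blk_def)
    show ?thesis
    proof (cases "v \<in> fst sc")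
      case True then show ?thesis using sc(1) by (intro bexI[of _ "[]"]) auto
    next
      case False
      then have "v \<in> C'" using C' QNode.prems by auto
      have "c \<in> set_option (snd sc)" using Some by simp
      moreover have "snd sc \<in> Basic_BNFs.snds sc" by (cases sc) simp
      ultimately obtain q where q: "q \<in> positions c" "v \<in> node_vs (node_at c q)"
        using QNode.IH[OF sc(1)] C'(1) \<open>v \<in> C'\<close> by blast
      show ?thesis
        by (rule bexI[of _ "i # q"]) (use q i Some in \<open>simp_all add: pos_Q node_at_Q\<close>)
    qed
  qed
qed

lemma in_all_verts: "q \<in> positions t \<Longrightarrow> v \<in> node_vs (node_at t q) \<Longrightarrow> v \<in> all_verts t"
  unfolding all_verts_def by auto

lemma prov_all: "C \<in> set (cliques t) \<Longrightarrow> C \<subseteq> all_verts t"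
proof
  fix v assume a: "C \<in> set (cliques t)" "v \<in> C"
  obtain q where "q \<in> positions t" "v \<in> node_vs (node_at t q)" using prov[OF a] by blast
  then show "v \<in> all_verts t" by (rule in_all_verts)
qed

lemma cl_ne: "(\<forall>q ss. q \<in> positions t \<longrightarrow> node_at t q = QNode ss \<longrightarrow> ss \<noteq> []) \<Longrightarrow> cliques t \<noteq> []"
proof (induction t rule: mpq.induct)
  case (PNode A cs)
  show ?case
  proof (cases cs)
    case Nil then show ?thesis by simp
  next
    case (Cons c cs')
    have c0: "c \<in> set cs" using Cons by simp
    have "cliques c \<noteq> []"
    proof (rule PNode.IH[OF c0], intro allI impI)
      fix q ss assume "q \<in> positions c" "node_at c q = QNode ss"
      then show "ss \<noteq> []" using PNode.prems[rule_format, of "0 # q" ss] Cons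
        by (simp add: pos_P node_at_P)
    qed
    then show ?thesis using Cons by simp
  qed
next
  case (QNode ss)
  have ne: "ss \<noteq> []" using QNode.prems[rule_format, of "[]" ss] by simp
  then obtain s0 ss' where Cs: "ss = s0 # ss'" by (cases ss) auto
  have s0: "s0 \<in> set ss" using Cs by simp
  have "blk s0 \<noteq> []"
  proof (cases "snd s0")
    case None then show ?thesis by (simp add: blk_def)
  next
    case (Some c)
    have "c \<in> set_option (snd s0)" using Some by simp
    moreover have "snd s0 \<in> Basic_BNFs.snds s0" by (cases s0) simp
    moreover have "\<forall>q ss'. q \<in> positions c \<longrightarrow> node_at c q = QNode ss' \<longrightarrow> ss' \<noteq> []"
    proof (intro allI impI)
      fix q ss'' assume "q \<in> positions c" "node_at c q = QNode ss''"
      then show "ss'' \<noteq> []" using QNode.prems[rule_format, of "0 # q" ss''] Cs Some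
        by (simp add: pos_Q node_at_Q)
    qed
    ultimately have "cliques c \<noteq> []" using QNode.IH[OF s0] by blast
    then show ?thesis using Some by (simp add: blk_def)
  qed
  then show ?case using Cs by simp
qed

lemma concat_split:
  "i < length xs \<Longrightarrow> concat (map f xs) = concat (map f (take i xs)) @ f (xs!i) @ concat (map f (drop (Suc i) xs))"
  by (metis (no_types, lifting) concat.simps(2) concat_append id_take_nth_drop map_append list.simps(9))

lemma in_take_concat: assumes "e \<in> set (concat (map f (take i xs)))"
  shows "\<exists>j<i. j < length xs \<and> e \<in> set (f (xs!j))"
proof -
  from assms obtain x where x: "x \<in> set (take i xs)" "e \<in> set (f x)" by auto
  from x(1) obtain j where "j < length (take i xs)" "take i xs ! j = x" by (metis in_set_conv_nth)
  then show ?thesis using x(2) by (intro exI[of _ j]) auto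
qed

lemma in_drop_concat: assumes "e \<in> set (concat (map f (drop i xs)))"
  shows "\<exists>j. i \<le> j \<and> j < length xs \<and> e \<in> set (f (xs!j))"
proof -
  from assms obtain x where x: "x \<in> set (drop i xs)" "e \<in> set (f x)" by auto
  from x(1) obtain j where "j < length (drop i xs)" "drop i xs ! j = x" by (metis in_set_conv_nth)
  then show ?thesis using x(2) by (intro exI[of _ "i + j"]) auto
qed


lemma Pchild_prov: assumes "j < length cs" "e \<in> set (map ((\<union>) A) (cliques (cs!j)))" "v \<in> e"
  shows "v \<in> A \<or> (\<exists>q. j # q \<in> positions (PNode A cs) \<and> v \<in> node_vs (node_at (PNode A cs) (j # q)))"
proof (cases "v \<in> A")
  case False
  from assms(2) obtain C where C: "C \<in> set (cliques (cs!j))" "e = A \<union> C" by auto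
  then have "v \<in> C" using False assms(3) by auto
  from prov[OF C(1) this] obtain q where "q \<in> positions (cs!j)" "v \<in> node_vs (node_at (cs!j) q)" by blast
  then show ?thesis using assms(1) by (intro disjI2 exI[of _ q]) (simp add: pos_P node_at_P)
qed simp

lemma Qchild_prov: assumes "j < length ss" "e \<in> set (blk (ss!j))" "v \<in> e"
  shows "v \<in> fst (ss!j) \<or> (\<exists>q. j # q \<in> positions (QNode ss) \<and> v \<in> node_vs (node_at (QNode ss) (j # q)))"
proof (cases "v \<in> fst (ss!j)")
  case False
  show ?thesis
  proof (cases "snd (ss!j)")
    case None then show ?thesis using assms False by (simp add: blk_def)
  next
    case (Some c)
    from assms(2) Some obtain C where C: "C \<in> set (cliques c)" "e = fst (ss!j) \<union> C" by (auto simp: blk_def)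
    then have "v \<in> C" using False assms(3) by auto
    from prov[OF C(1) this] obtain q where "q \<in> positions c" "v \<in> node_vs (node_at c q)" by blast
    then show ?thesis using assms(1) Some by (intro disjI2 exI[of _ q]) (simp add: pos_Q node_at_Q)
  qed
qed simp

lemma fst_sub_Q: "j < length ss \<Longrightarrow> fst (ss!j) \<subseteq> node_vs (QNode ss)"
proof
  fix x assume j: "j < length ss" and x: "x \<in> fst (ss!j)"
  have "ss!j \<in> set ss" using j by simp
  then show "x \<in> node_vs (QNode ss)" using x by auto
qed

lemma split_ch: assumes "i # p \<in> positions t"
  shows "\<exists>pre post W c. cliques t = pre @ map ((\<union>) W) (cliques c) @ post \<and> W \<subseteq> node_vs t \<and>
     p \<in> positions c \<and> (\<forall>q. q \<in> positions c \<longrightarrow> i # q \<in> positions t \<and> node_at t (i # q) = node_at c q) \<and>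
     (\<forall>e\<in>set pre \<union> set post. \<forall>v\<in>e. v \<in> node_vs t \<or>
         (\<exists>j q. j \<noteq> i \<and> j # q \<in> positions t \<and> v \<in> node_vs (node_at t (j # q))))"
proof (cases t)
  case (PNode A cs)
  have i: "i < length cs" and p: "p \<in> positions (cs!i)" using assms PNode by (auto simp: pos_P)
  define f where "f c = map ((\<union>) A) (cliques c)" for c
  have cne: "cs \<noteq> []" using i by auto
  have ct: "cliques t = concat (map f (take i cs)) @ f (cs!i) @ concat (map f (drop (Suc i) cs))"
    using PNode cne concat_split[OF i, of f] by (simp add: f_def[abs_def])
  show ?thesis
  proof (intro exI conjI)
    show "cliques t = concat (map f (take i cs)) @ map ((\<union>) A) (cliques (cs!i)) @ concat (map f (drop (Suc i) cs))"
      using ct by (simp add: f_def)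
    show "A \<subseteq> node_vs t" using PNode by simp
    show "p \<in> positions (cs!i)" by fact
    show "\<forall>q. q \<in> positions (cs!i) \<longrightarrow> i # q \<in> positions t \<and> node_at t (i # q) = node_at (cs!i) q"
      using PNode i by (simp add: node_at_P pos_P)
    show "\<forall>e\<in>set (concat (map f (take i cs))) \<union> set (concat (map f (drop (Suc i) cs))). \<forall>v\<in>e. v \<in> node_vs t \<or>
         (\<exists>j q. j \<noteq> i \<and> j # q \<in> positions t \<and> v \<in> node_vs (node_at t (j # q)))"
    proof (intro ballI)
      fix e v assume e: "e \<in> set (concat (map f (take i cs))) \<union> set (concat (map f (drop (Suc i) cs)))" and v: "v \<in> e"
      from e obtain j where j: "j \<noteq> i" "j < length cs" "e \<in> set (f (cs!j))"
        using in_take_concat[of e f i cs] in_drop_concat[of e f "Suc i" cs] by force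
      from Pchild_prov[OF j(2) _ v, of A] j(3) show "v \<in> node_vs t \<or>
         (\<exists>j q. j \<noteq> i \<and> j # q \<in> positions t \<and> v \<in> node_vs (node_at t (j # q)))"
        using PNode j(1) by (auto simp: f_def)
    qed
  qed
next
  case (QNode ss)
  have i: "i < length ss" using assms QNode by (auto simp: pos_Q)
  obtain c where c: "snd (ss!i) = Some c" "p \<in> positions c" using assms QNode by (auto simp: pos_Q)
  have ct: "cliques t = concat (map blk (take i ss)) @ blk (ss!i) @ concat (map blk (drop (Suc i) ss))"
    using QNode concat_split[OF i, of blk] by simp
  show ?thesis
  proof (intro exI conjI)
    show "cliques t = concat (map blk (take i ss)) @ map ((\<union>) (fst (ss!i))) (cliques c) @ concat (map blk (drop (Suc i) ss))"
      using ct c by (simp add: blk_def)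
    show "fst (ss!i) \<subseteq> node_vs t" using QNode fst_sub_Q[OF i] by simp
    show "p \<in> positions c" by fact
    show "\<forall>q. q \<in> positions c \<longrightarrow> i # q \<in> positions t \<and> node_at t (i # q) = node_at c q"
      using QNode i c by (simp add: node_at_Q pos_Q)
    show "\<forall>e\<in>set (concat (map blk (take i ss))) \<union> set (concat (map blk (drop (Suc i) ss))). \<forall>v\<in>e. v \<in> node_vs t \<or>
         (\<exists>j q. j \<noteq> i \<and> j # q \<in> positions t \<and> v \<in> node_vs (node_at t (j # q)))"
    proof (intro ballI)
      fix e v assume e: "e \<in> set (concat (map blk (take i ss))) \<union> set (concat (map blk (drop (Suc i) ss)))" and v: "v \<in> e"
      from e obtain j where j: "j \<noteq> i" "j < length ss" "e \<in> set (blk (ss!j))"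
        using in_take_concat[of e blk i ss] in_drop_concat[of e blk "Suc i" ss] by force
      from Qchild_prov[OF j(2) j(3) v] show "v \<in> node_vs t \<or>
         (\<exists>j q. j \<noteq> i \<and> j # q \<in> positions t \<and> v \<in> node_vs (node_at t (j # q)))"
        using QNode j(1) fst_sub_Q[OF j(2)] by blast
    qed
  qed
qed

lemma block: "p \<in> positions t \<Longrightarrow> \<exists>pre post U. cliques t = pre @ map ((\<union>) U) (cliques (node_at t p)) @ post \<and>
   (\<forall>v. v \<in> U \<or> (\<exists>C\<in>set pre \<union> set post. v \<in> C) \<longrightarrow>
      (\<exists>q\<in>positions t. (\<forall>r. q \<noteq> p @ r) \<and> v \<in> node_vs (node_at t q)))"
proof (induction p arbitrary: t)
  case Nil
  show ?case by (rule exI[of _ "[]"], rule exI[of _ "[]"], rule exI[of _ "{}"]) simp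
next
  case (Cons i p)
  from split_ch[OF Cons.prems] obtain pre post W c where
    ct: "cliques t = pre @ map ((\<union>) W) (cliques c) @ post" and W: "W \<subseteq> node_vs t" and
    pc: "p \<in> positions c" and nt: "\<forall>q. q \<in> positions c \<longrightarrow> i # q \<in> positions t \<and> node_at t (i # q) = node_at c q" and
    pp: "\<forall>e\<in>set pre \<union> set post. \<forall>v\<in>e. v \<in> node_vs t \<or>
         (\<exists>j q. j \<noteq> i \<and> j # q \<in> positions t \<and> v \<in> node_vs (node_at t (j # q)))" by blast
  from Cons.IH[OF pc] obtain pre' post' U where
    eq: "cliques c = pre' @ map ((\<union>) U) (cliques (node_at c p)) @ post'" and
    pv: "\<forall>v. v \<in> U \<or> (\<exists>C\<in>set pre' \<union> set post'. v \<in> C) \<longrightarrow>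
      (\<exists>q\<in>positions c. (\<forall>r. q \<noteq> p @ r) \<and> v \<in> node_vs (node_at c q))" by blast
  have lift: "\<exists>q'\<in>positions t. (\<forall>r. q' \<noteq> (i # p) @ r) \<and> v \<in> node_vs (node_at t q')"
    if "q \<in> positions c" "\<forall>r. q \<noteq> p @ r" "v \<in> node_vs (node_at c q)" for q v
    using that nt by (intro bexI[of _ "i # q"]) auto
  have root: "\<exists>q'\<in>positions t. (\<forall>r. q' \<noteq> (i # p) @ r) \<and> v \<in> node_vs (node_at t q')"
    if "v \<in> node_vs t" for v
    using that by (intro bexI[of _ "[]"]) auto
  have side: "\<exists>q'\<in>positions t. (\<forall>r. q' \<noteq> (i # p) @ r) \<and> v \<in> node_vs (node_at t q')"
    if "j \<noteq> i" "j # q \<in> positions t" "v \<in> node_vs (node_at t (j # q))" for j q v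
    using that by (intro bexI[of _ "j # q"]) auto
  have nt2: "node_at t (i # p) = node_at c p" using nt pc by blast
  show ?case
  proof (intro exI conjI)
    show "cliques t = (pre @ map ((\<union>) W) pre') @ map ((\<union>) (W \<union> U)) (cliques (node_at t (i # p))) @ (map ((\<union>) W) post' @ post)"
      using ct eq nt2 by (simp add: Un_assoc)
    show "\<forall>v. v \<in> W \<union> U \<or> (\<exists>C\<in>set (pre @ map ((\<union>) W) pre') \<union> set (map ((\<union>) W) post' @ post). v \<in> C) \<longrightarrow>
      (\<exists>q\<in>positions t. (\<forall>r. q \<noteq> (i # p) @ r) \<and> v \<in> node_vs (node_at t q))"
    proof (intro allI impI)
      fix v assume hv: "v \<in> W \<union> U \<or> (\<exists>C\<in>set (pre @ map ((\<union>) W) pre') \<union> set (map ((\<union>) W) post' @ post). v \<in> C)"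
      consider (w) "v \<in> W" | (u) "v \<in> U \<or> (\<exists>C\<in>set pre' \<union> set post'. v \<in> C)" | (o) "\<exists>C\<in>set pre \<union> set post. v \<in> C"
        using hv by auto
      then show "\<exists>q\<in>positions t. (\<forall>r. q \<noteq> (i # p) @ r) \<and> v \<in> node_vs (node_at t q)"
      proof cases
        case w then show ?thesis using root W by blast
      next
        case u
        then obtain q where "q \<in> positions c" "\<forall>r. q \<noteq> p @ r" "v \<in> node_vs (node_at c q)"
          using pv by blast
        then show ?thesis by (rule lift)
      next
        case o
        then obtain e where "e \<in> set pre \<union> set post" "v \<in> e" by blast
        then have "v \<in> node_vs t \<or> (\<exists>j q. j \<noteq> i \<and> j # q \<in> positions t \<and> v \<in> node_vs (node_at t (j # q)))"
          using pp by blast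
        then show ?thesis using root side by blast
      qed
    qed
  qed
qed



lemma equiv_refl: "equiv_tree t t"
proof (induction t rule: mpq.induct)
  case (PNode A cs)
  have "list_all2 equiv_tree cs cs" by (rule list.rel_refl_strong) (rule PNode.IH)
  then show ?case using eqP[of cs cs cs A] by simp
next
  case (QNode ss)
  have "list_all2 (\<lambda>sc sd. fst sc = fst sd \<and> rel_option equiv_tree (snd sc) (snd sd)) ss ss"
  proof (rule list.rel_refl_strong)
    fix z assume z: "z \<in> set ss"
    have sz: "snd z \<in> Basic_BNFs.snds z" by (cases z) simp
    have "rel_option equiv_tree (snd z) (snd z)"
      by (rule option.rel_refl_strong) (rule QNode.IH[OF z sz])
    then show "fst z = fst z \<and> rel_option equiv_tree (snd z) (snd z)" by simp
  qed
  then show ?case using eqQ[of ss ss False] by simp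
qed

lemma ext_max: assumes "finite V" "is_clique V E C" shows "\<exists>M\<in>max_cliques V E. C \<subseteq> M"
proof -
  let ?S = "{D. is_clique V E D \<and> C \<subseteq> D}"
  have "?S \<subseteq> Pow V" unfolding is_clique_def by auto
  then have fS: "finite ?S" using assms(1) by (meson finite_Pow_iff finite_subset)
  have "C \<in> ?S" using assms(2) by simp
  then have "?S \<noteq> {}" by blast
  from finite_has_maximal[OF fS this] obtain m where m: "m \<in> ?S" "\<forall>b\<in>?S. m \<le> b \<longrightarrow> m = b" by blast
  have "m \<in> max_cliques V E" unfolding max_cliques_def
  proof (intro CollectI conjI allI impI)
    show "is_clique V E m" using m(1) by simp
    fix D assume "is_clique V E D \<and> m \<subseteq> D"
    then have "D \<in> ?S" using m(1) by auto
    then show "D = m" using m(2) \<open>is_clique V E D \<and> m \<subseteq> D\<close> by blast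
  qed
  then show ?thesis using m(1) by blast
qed


lemma final_step:
  assumes sg: "simple_graph V E" and cs: "consec L" and setL: "set L = max_cliques V E"
    and xy: "{x,y} \<in> E" "x \<noteq> y"
    and K1: "\<forall>M\<in>set L. y \<in> M \<longrightarrow> M \<subseteq> insert y K"
    and Kc: "\<forall>u\<in>insert y K. \<forall>v\<in>insert y K. u \<noteq> v \<longrightarrow> {u,v} \<in> E" and KV: "insert y K \<subseteq> V"
    and sp: "L = A @ B" "A \<noteq> [] \<Longrightarrow> B \<noteq> [] \<Longrightarrow> last A \<inter> hd B \<subseteq> insert y (insert y (K - {x}))"
      "(B \<noteq> [] \<and> insert y (K - {x}) - {y} \<subseteq> hd B) \<or> (A \<noteq> [] \<and> insert y (K - {x}) - {y} \<subseteq> last A)"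
  shows "interval_graph V (E - {{x,y}})"
proof -
  define D where "D = insert y (K - {x})"
  define L' where "L' = map (\<lambda>C. C - {y}) A @ [D] @ map (\<lambda>C. C - {y}) B"
  have fin: "finite V" using sg unfolding simple_graph_def by blast
  have c': "consec L'" unfolding L'_def
    using consec_insert[of A B y D] cs sp unfolding D_def by blast
  have setL': "set L' = insert D ((\<lambda>C. C - {y}) ` set L)" unfolding L'_def sp(1) by auto
  have maxcl: "M \<subseteq> V \<and> (\<forall>u\<in>M. \<forall>v\<in>M. u \<noteq> v \<longrightarrow> {u,v} \<in> E)" if "M \<in> set L" for M
    using that setL unfolding max_cliques_def is_clique_def by blast
  have Eid: "\<forall>e\<in>E. \<exists>u v. e = {u, v} \<and> u \<noteq> v \<and> u \<in> V \<and> v \<in> V" using sg unfolding simple_graph_def by blast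
  show ?thesis
  proof (rule interval_from_list[OF _ c'])
    show "simple_graph V (E - {{x, y}})" using sg unfolding simple_graph_def by blast
    show "\<forall>C\<in>set L'. C \<subseteq> V \<and> (\<forall>u\<in>C. \<forall>v\<in>C. u \<noteq> v \<longrightarrow> {u, v} \<in> E - {{x, y}})"
    proof
      fix C assume "C \<in> set L'"
      then consider "C = D" | M where "M \<in> set L" "C = M - {y}" using setL' by blast
      then show "C \<subseteq> V \<and> (\<forall>u\<in>C. \<forall>v\<in>C. u \<noteq> v \<longrightarrow> {u, v} \<in> E - {{x, y}})"
      proof cases
        case 1
        have "D \<subseteq> insert y K" "x \<notin> D" using xy unfolding D_def by auto
        moreover have "{u,v} \<noteq> {x,y}" if "u \<in> D" "v \<in> D" for u v
          using that \<open>x \<notin> D\<close> by (metis insertI1 insert_commute insert_iff doubleton_eq_iff)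
        ultimately show ?thesis using Kc KV 1 by blast
      next
        case 2
        have "{u,v} \<noteq> {x,y}" if "u \<in> C" "v \<in> C" for u v
          using that 2 by (metis Diff_iff doubleton_eq_iff singletonI)
        then show ?thesis using maxcl[OF 2(1)] 2 by blast
      qed
    qed
    have inL': "M - {y} \<in> set L'" if "M \<in> set L" for M
      unfolding setL' using that by blast
    have DL: "D \<in> set L'" unfolding setL' by blast
    show "\<forall>v\<in>V. \<exists>C\<in>set L'. v \<in> C"
    proof
      fix v assume v: "v \<in> V"
      show "\<exists>C\<in>set L'. v \<in> C"
      proof (cases "v = y")
        case True
        have "y \<in> D" unfolding D_def by simp
        then show ?thesis using DL True by (intro bexI[of _ D]) simp_all
      next
        case False
        have "is_clique V E {v}" using v unfolding is_clique_def by simp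
        from ext_max[OF fin this] obtain M where M0: "M \<in> max_cliques V E" "{v} \<subseteq> M" by blast
        then have MinL: "M \<in> set L" and vM: "v \<in> M" using setL by simp_all
        have "v \<in> M - {y}" using vM False by blast
        then show ?thesis using inL'[OF MinL] by (rule bexI)
      qed
    qed
    show "\<forall>u\<in>V. \<forall>v\<in>V. u \<noteq> v \<longrightarrow> {u, v} \<in> E - {{x, y}} \<longrightarrow> (\<exists>C\<in>set L'. u \<in> C \<and> v \<in> C)"
    proof (intro ballI impI)
      fix u v assume u: "u \<in> V" and v: "v \<in> V" and uv: "u \<noteq> v" and e: "{u, v} \<in> E - {{x, y}}"
      have euv: "{u,v} \<in> E" using e by simp
      have evu: "{v,u} \<in> E" using euv by (simp add: insert_commute)
      have "is_clique V E {u,v}" unfolding is_clique_def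
      proof (intro conjI ballI impI)
        show "{u,v} \<subseteq> V" using u v by simp
        fix a b assume "a \<in> {u,v}" "b \<in> {u,v}" "a \<noteq> b"
        then have "(a = u \<and> b = v) \<or> (a = v \<and> b = u)" by blast
        then show "{a,b} \<in> E" using euv evu by blast
      qed
      from ext_max[OF fin this] obtain M where M0: "M \<in> max_cliques V E" "{u,v} \<subseteq> M" by blast
      then have M: "M \<in> set L" "u \<in> M" "v \<in> M" using setL by simp_all
      show "\<exists>C\<in>set L'. u \<in> C \<and> v \<in> C"
      proof (cases "u = y \<or> v = y")
        case False
        have "u \<in> M - {y} \<and> v \<in> M - {y}" using False M by blast
        then show ?thesis using inL'[OF M(1)] by (rule bexI)
      next
        case True
        have "y \<in> M" using True M by blast
        then have MK: "M \<subseteq> insert y K" using K1 M(1) by blast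
        have nxy: "{u,v} \<noteq> {x,y}" using e by simp
        have Dy: "y \<in> D" unfolding D_def by simp
        have Dw: "w \<in> D" if "w \<in> M" "w \<noteq> y" "w \<noteq> x" for w
          using that MK unfolding D_def by blast
        have "u \<in> D \<and> v \<in> D"
        proof (cases "u = y")
          case True
          then have "v \<noteq> y" using uv by simp
          moreover have "v \<noteq> x" using nxy True by (auto simp: insert_commute)
          ultimately show ?thesis using Dw[of v] M Dy True by simp
        next
          case False
          then have "v = y" using \<open>u = y \<or> v = y\<close> by simp
          moreover have "u \<noteq> x" using nxy \<open>v = y\<close> by auto
          ultimately show ?thesis using Dw[of u] M Dy False by simp
        qed
        then have "u \<in> D" "v \<in> D" by simp_all
        then show ?thesis using DL by (intro bexI[of _ D]) simp_all
      qed
    qed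
  qed
qed


lemma last_take_blk:
  assumes "0 < j" "j \<le> length xs" "\<forall>k<length xs. f (xs!k) \<noteq> []"
  shows "P @ map g (concat (map f (take j xs))) \<noteq> [] \<and>
    (\<exists>e\<in>set (f (xs!(j-1))). last (P @ map g (concat (map f (take j xs)))) = g e)"
proof -
  have tk: "take j xs = take (j-1) xs @ [xs!(j-1)]" using assms
    by (metis Suc_diff_1 Suc_le_lessD take_Suc_conv_app_nth)
  have ne: "f (xs!(j-1)) \<noteq> []" using assms by simp
  have "last (P @ map g (concat (map f (take j xs)))) = g (last (f (xs!(j-1))))"
    using ne by (simp add: tk last_map)
  moreover have "last (f (xs!(j-1))) \<in> set (f (xs!(j-1)))" using ne by simp
  ultimately show ?thesis using ne by (auto simp: tk)
qed

lemma hd_drop_blk: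
  assumes "j < length xs" "f (xs!j) \<noteq> []"
  shows "map g (concat (map f (drop j xs))) @ P \<noteq> [] \<and>
    (\<exists>e\<in>set (f (xs!j)). hd (map g (concat (map f (drop j xs))) @ P) = g e)"
proof -
  have dr: "drop j xs = xs!j # drop (Suc j) xs" using assms by (simp add: Cons_nth_drop_Suc)
  have "hd (map g (concat (map f (drop j xs))) @ P) = g (hd (f (xs!j)))"
    using assms(2) by (simp add: dr hd_map)
  moreover have "hd (f (xs!j)) \<in> set (f (xs!j))" using assms(2) by simp
  ultimately show ?thesis using assms(2) by (auto simp: dr)
qed



theorem mainTheorem7:
  fixes n :: nat and E :: "nat set set" and T :: mpq and x y a :: nat
    and ss :: "(nat set \<times> mpq option) list"
  assumes "interval_graph {1..n} E"
    and "mpq_tree_of {1..n} E T"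
    and "{x, y} \<in> E"
    and "over T x y" and "node T x \<noteq> node T y"
    and "almost_rotable T x y"
    and "starts_in_central T x y a"
    and "node_at T (node T x) = QNode ss"
    and "\<forall>z \<in> Vsub ss a - {y}. {y, z} \<notin> E"
    and "(\<exists>b. 1 < b \<and> b \<le> lidx ss x \<and> sec ss a - {x} \<subseteq> sec ss b \<and>
              sec ss (b - 1) \<inter> sec ss b \<subseteq> sec ss a)
       \<or> (\<exists>b. ridx ss x \<le> b \<and> b < length ss \<and> sec ss a - {x} \<subseteq> sec ss b \<and>
              sec ss b \<inter> sec ss (b + 1) \<subseteq> sec ss a)
       \<or> sec ss a - {x} \<subseteq> sec ss 1
       \<or> sec ss a - {x} \<subseteq> sec ss (length ss)"
  shows "interval_graph {1..n} (E - {{x, y}})"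
proof -
  note mt = assms(2)[unfolded mpq_tree_of_def]
  have allv: "all_verts T = {1..n}" using mt by (elim conjE)
  have uniqV: "\<forall>v\<in>{1..n}. \<exists>!p. p \<in> positions T \<and> v \<in> node_vs (node_at T p)" using mt by (elim conjE)
  have Qok: "\<forall>p ss. p \<in> positions T \<and> node_at T p = QNode ss \<longrightarrow>
        length ss \<ge> 3 \<and>
        (\<forall>v \<in> node_vs (QNode ss). \<exists>l r. 1 \<le> l \<and> l < r \<and> r \<le> length ss \<and>
            (\<forall>i. 1 \<le> i \<and> i \<le> length ss \<longrightarrow> (v \<in> sec ss i \<longleftrightarrow> l \<le> i \<and> i \<le> r)))"
    using mt by (elim conjE)
  have Qok3: "3 \<le> length ss'" if "p \<in> positions T" "node_at T p = QNode ss'" for p ss'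
    using Qok that by blast
  have setL: "set (cliques T) = max_cliques {1..n} E" using mt by (elim conjE)
  have eqv: "{cliques T' |T'. equiv_tree T T'} = {L. consecutive_clique_order {1..n} E L}"
    using mt by (elim conjE)
  have "cliques T \<in> {cliques T' |T'. equiv_tree T T'}" using equiv_refl by blast
  then have "consecutive_clique_order {1..n} E (cliques T)" using eqv by simp
  then have cs: "consec (cliques T)" unfolding consecutive_clique_order_def consec_def by blast
  have sg: "simple_graph {1..n} E" using assms(1) unfolding interval_graph_def by blast
  obtain u v where uv: "{x,y} = {u,v}" "u \<noteq> v" "u \<in> {1..n}" "v \<in> {1..n}"
    using sg assms(3) unfolding simple_graph_def by blast
  have xV: "x \<in> {1..n}" and yV: "y \<in> {1..n}" and xy: "x \<noteq> y"
    using uv by (auto simp: doubleton_eq_iff)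
  have inV: "v \<in> {1..n}" if "q \<in> positions T" "v \<in> node_vs (node_at T q)" for v q
    using in_all_verts[OF that] allv by simp
  have uq: "q = q'" if "q \<in> positions T" "q' \<in> positions T" "v \<in> node_vs (node_at T q)"
     "v \<in> node_vs (node_at T q')" for v q q'
  proof -
    have "v \<in> {1..n}" using inV that by blast
    then have "\<exists>!p. p \<in> positions T \<and> v \<in> node_vs (node_at T p)" using uniqV by blast
    then show "q = q'" using that by blast
  qed
  have nd: "node T v \<in> positions T \<and> v \<in> node_vs (node_at T (node T v))" if "v \<in> {1..n}" for v
  proof -
    have "\<exists>!p. p \<in> positions T \<and> v \<in> node_vs (node_at T p)" using uniqV that by blast
    from theI'[OF this] show ?thesis unfolding node_def .
  qed
  define px where "px = node T x"
  define py where "py = node T y"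
  have pxT: "px \<in> positions T" and xpx: "x \<in> node_vs (node_at T px)" using nd[OF xV] px_def by auto
  have pyT: "py \<in> positions T" and ypy: "y \<in> node_vs (node_at T py)" using nd[OF yV] py_def by auto
  have QN: "node_at T px = QNode ss" using assms(8) px_def by simp
  obtain r where r: "py = px @ r" using assms(4) unfolding over_def px_def py_def by blast
  have "r \<noteq> []" using r assms(5) px_def py_def by auto
  then obtain i r' where ir: "r = i # r'" by (cases r) auto
  have rpos: "i # r' \<in> positions (QNode ss)" using pyT r ir pos_app[OF pxT] QN by simp
  then have i: "i < length ss" and "\<exists>c. snd (ss!i) = Some c \<and> r' \<in> positions c"
    by (simp_all add: pos_Q)
  then obtain c where c: "snd (ss!i) = Some c" "r' \<in> positions c" by blast
  have QposT: "px @ j # q \<in> positions T \<and> node_at T (px @ j # q) = node_at (QNode ss) (j # q)"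
    if "j # q \<in> positions (QNode ss)" for j q
    using that pos_app[OF pxT] node_at_app[OF pxT] QN by simp
  from assms(7) obtain ss0 where ss0: "node_at T (node T x) = QNode ss0"
    "a = Suc (node T y ! length (node T x))" "lidx ss0 x < a" "a < ridx ss0 x"
    unfolding starts_in_central_def by blast
  have "ss0 = ss" using ss0(1) assms(8) by simp
  then have a: "a = Suc i" and la: "lidx ss x < a" and ar: "a < ridx ss x"
    using ss0 r ir unfolding px_def py_def by auto
  have secA: "sec ss a = fst (ss!i)" using a by (simp add: sec_def)
  have VA: "Vsub ss a = all_verts c" using a c by (simp add: Vsub_def subverts_def)
  from block[OF pxT] obtain pre post U where
    Ldec: "cliques T = pre @ map ((\<union>) U) (cliques (node_at T px)) @ post" and
    PV: "\<forall>v. v \<in> U \<or> (\<exists>C\<in>set pre \<union> set post. v \<in> C) \<longrightarrow>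
      (\<exists>q\<in>positions T. (\<forall>r. q \<noteq> px @ r) \<and> v \<in> node_vs (node_at T q))" by blast
  have Ldec2: "cliques T = pre @ map ((\<union>) U) (concat (map blk ss)) @ post" using Ldec QN by simp
  have outside: "\<forall>r. q \<noteq> px @ r"
    if "v \<in> U \<or> (\<exists>C\<in>set pre \<union> set post. v \<in> C)" "q \<in> positions T" "v \<in> node_vs (node_at T q)" for v q
  proof -
    from PV that(1) obtain q0 where q0: "q0 \<in> positions T" "\<forall>r. q0 \<noteq> px @ r" "v \<in> node_vs (node_at T q0)"
      by blast
    have "q0 = q" using uq[OF q0(1) that(2) q0(3) that(3)] .
    then show ?thesis using q0(2) by simp
  qed
  have xU: "x \<notin> U"
  proof
    assume "x \<in> U"
    then have "\<forall>r. px \<noteq> px @ r" using outside[OF _ pxT xpx] by blast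
    then have "px \<noteq> px @ []" by blast
    then show False by simp
  qed
  have yout: "\<not> (y \<in> U \<or> (\<exists>C\<in>set pre \<union> set post. y \<in> C))"
  proof
    assume "y \<in> U \<or> (\<exists>C\<in>set pre \<union> set post. y \<in> C)"
    then have "\<forall>r. py \<noteq> px @ r" using outside[OF _ pyT ypy] by blast
    then show False using r by blast
  qed
  have Cl: "v \<in> fst (ss!j) \<or> (\<exists>q. px @ j # q \<in> positions T \<and> v \<in> node_vs (node_at T (px @ j # q)))"
    if "j < length ss" "e \<in> set (blk (ss!j))" "v \<in> e" for j e v
  proof -
    from Qchild_prov[OF that] show ?thesis
    proof
      assume "v \<in> fst (ss!j)" then show ?thesis by simp
    next
      assume "\<exists>q. j # q \<in> positions (QNode ss) \<and> v \<in> node_vs (node_at (QNode ss) (j # q))"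
      then obtain q where q: "j # q \<in> positions (QNode ss)" "v \<in> node_vs (node_at (QNode ss) (j # q))" by blast
      then show ?thesis using QposT[OF q(1)] by auto
    qed
  qed
  have secpx: "v \<in> node_vs (node_at T px)" if "j < length ss" "v \<in> fst (ss!j)" for j v
    using fst_sub_Q[OF that(1)] that(2) QN by auto
  have blksup: "fst (ss!j) \<subseteq> e" if "e \<in> set (blk (ss!j))" for j e
    using that by (auto simp: blk_def split: option.splits)
  have blkne: "blk (ss!j) \<noteq> []" if j: "j < length ss" for j
  proof (cases "snd (ss!j)")
    case None then show ?thesis by (simp add: blk_def)
  next
    case (Some c')
    have "\<forall>q ss'. q \<in> positions c' \<longrightarrow> node_at c' q = QNode ss' \<longrightarrow> ss' \<noteq> []"
    proof (intro allI impI)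
      fix q ss' assume h: "q \<in> positions c'" "node_at c' q = QNode ss'"
      then have h2: "j # q \<in> positions (QNode ss)" "node_at (QNode ss) (j#q) = QNode ss'"
        using j Some by (simp_all add: pos_Q node_at_Q)
      have "px @ j # q \<in> positions T" "node_at T (px @ j # q) = QNode ss'"
        using QposT[OF h2(1)] h2(2) by simp_all
      then have "3 \<le> length ss'" by (rule Qok3)
      then show "ss' \<noteq> []" by auto
    qed
    then have "cliques c' \<noteq> []" by (rule cl_ne)
    then show ?thesis using Some by (simp add: blk_def)
  qed
  have blkne': "\<forall>k<length ss. blk (ss!k) \<noteq> []" using blkne by blast
  have adj: "v \<in> fst (ss!(j-1)) \<and> v \<in> fst (ss!j)"
    if j: "0 < j" "j < length ss" and e: "e1 \<in> set (blk (ss!(j-1)))" "e2 \<in> set (blk (ss!j))"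
      and v: "v \<in> e1" "v \<in> e2" for j e1 e2 v
  proof -
    have j1: "j - 1 < length ss" using j by simp
    from Cl[OF j1 e(1) v(1)] Cl[OF j(2) e(2) v(2)] show ?thesis
    proof (elim disjE exE conjE)
      fix q q' assume h: "px @ (j-1) # q \<in> positions T" "v \<in> node_vs (node_at T (px @ (j-1) # q))"
        "px @ j # q' \<in> positions T" "v \<in> node_vs (node_at T (px @ j # q'))"
      have "px @ (j-1) # q = px @ j # q'" using uq[OF h(1) h(3) h(2) h(4)] .
      then have "j - 1 = j" by simp
      then show ?thesis using j by linarith
    next
      fix q assume h: "v \<in> fst (ss!(j-1))" "px @ j # q \<in> positions T" "v \<in> node_vs (node_at T (px @ j # q))"
      have "px = px @ j # q" using uq[OF pxT h(2) secpx[OF j1 h(1)] h(3)] .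
      then show ?thesis by simp
    next
      fix q assume h: "v \<in> fst (ss!j)" "px @ (j-1) # q \<in> positions T" "v \<in> node_vs (node_at T (px @ (j-1) # q))"
      have "px = px @ (j-1) # q" using uq[OF pxT h(2) secpx[OF j(2) h(1)] h(3)] .
      then show ?thesis by simp
    qed simp
  qed
  have notpre: False if "\<exists>C\<in>set pre \<union> set post. v \<in> C" "j < length ss" "e \<in> set (blk (ss!j))" "v \<in> e" for v j e
  proof -
    have o: "v \<in> U \<or> (\<exists>C\<in>set pre \<union> set post. v \<in> C)" using that(1) by blast
    from Cl[OF that(2-4)] show False
    proof
      assume "v \<in> fst (ss!j)"
      then have "\<forall>r. px \<noteq> px @ r" using outside[OF o pxT] secpx[OF that(2)] by blast
      then have "px \<noteq> px @ []" by blast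
      then show False by simp
    next
      assume "\<exists>q. px @ j # q \<in> positions T \<and> v \<in> node_vs (node_at T (px @ j # q))"
      then obtain q where q: "px @ j # q \<in> positions T" "v \<in> node_vs (node_at T (px @ j # q))" by blast
      have "\<forall>r. px @ j # q \<noteq> px @ r" using outside[OF o q] .
      then show False by blast
    qed
  qed
  define K where "K = U \<union> fst (ss!i)"
  have K1: "M \<subseteq> insert y K \<and> K \<subseteq> M" if M: "M \<in> set (cliques T)" "y \<in> M" for M
  proof -
    have "M \<notin> set pre \<union> set post" using yout M(2) by blast
    then have "M \<in> set (map ((\<union>) U) (concat (map blk ss)))" using M(1) Ldec2 by auto
    then obtain e where e: "e \<in> set (concat (map blk ss))" "M = U \<union> e" by auto
    then obtain sc where sc: "sc \<in> set ss" "e \<in> set (blk sc)" by auto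
    then obtain j where j0: "j < length ss" "ss!j = sc" by (metis in_set_conv_nth)
    have j: "j < length ss" "e \<in> set (blk (ss!j))" using j0 sc by simp_all
    have ye: "y \<in> e" using M(2) e(2) yout by blast
    have "j = i"
    proof -
      from Cl[OF j ye] show ?thesis
      proof
        assume "y \<in> fst (ss!j)"
        then have "y \<in> node_vs (node_at T px)" using secpx j by blast
        then have "px = py" using uq[OF pxT pyT _ ypy] by blast
        then show ?thesis using r ir by simp
      next
        assume "\<exists>q. px @ j # q \<in> positions T \<and> y \<in> node_vs (node_at T (px @ j # q))"
        then obtain q where q: "px @ j # q \<in> positions T" "y \<in> node_vs (node_at T (px @ j # q))" by blast
        have "px @ j # q = py" using uq[OF q(1) pyT q(2) ypy] .
        then show ?thesis using r ir by simp
      qed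
    qed
    then obtain C' where C': "C' \<in> set (cliques c)" "e = fst (ss!i) \<union> C'" using j(2) c by (auto simp: blk_def)
    have C'V: "C' \<subseteq> all_verts c" using prov_all[OF C'(1)] .
    have Mcl: "\<forall>u\<in>M. \<forall>w\<in>M. u \<noteq> w \<longrightarrow> {u,w} \<in> E" using M(1) setL unfolding max_cliques_def is_clique_def by blast
    have "C' \<subseteq> {y}"
    proof
      fix z assume z: "z \<in> C'"
      show "z \<in> {y}"
      proof (rule ccontr)
        assume nz: "z \<notin> {y}"
        then have "z \<in> Vsub ss a - {y}" using C'V z VA by auto
        moreover have "z \<in> M" using z C'(2) e(2) by blast
        then have "{y,z} \<in> E" using Mcl M(2) nz by auto
        ultimately show False using assms(9) by blast
      qed
    qed
    then show ?thesis using e(2) C'(2) unfolding K_def by auto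
  qed
  obtain Cy where Cy: "Cy \<in> set (cliques T)" "y \<in> Cy"
  proof -
    have "is_clique {1..n} E {y}" using yV unfolding is_clique_def by simp
    from ext_max[OF _ this] obtain M where "M \<in> max_cliques {1..n} E" "{y} \<subseteq> M" by auto
    then have "M \<in> set (cliques T)" "y \<in> M" using setL by simp_all
    then show ?thesis by (rule that)
  qed
  have KCy: "insert y K \<subseteq> Cy" using K1[OF Cy] Cy(2) by blast
  have Cycl: "Cy \<subseteq> {1..n} \<and> (\<forall>u\<in>Cy. \<forall>w\<in>Cy. u\<noteq>w \<longrightarrow> {u,w} \<in> E)"
    using Cy(1) setL unfolding max_cliques_def is_clique_def by blast
  have Kc: "\<forall>u\<in>insert y K. \<forall>w\<in>insert y K. u \<noteq> w \<longrightarrow> {u,w} \<in> E" using KCy Cycl by blast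
  have KV: "insert y K \<subseteq> {1..n}" using KCy Cycl by blast
  have K1': "\<forall>M\<in>set (cliques T). y \<in> M \<longrightarrow> M \<subseteq> insert y K" using K1 by blast
  have Dsub: "insert y (K - {x}) - {y} \<subseteq> U \<union> (sec ss a - {x})" unfolding K_def secA by blast
  have inT0U: "v \<in> insert y (insert y (K - {x}))" if "v \<in> U" for v
    using that xU unfolding K_def by blast
  have inT0S: "v \<in> insert y (insert y (K - {x}))" if "v \<in> sec ss a" "v \<noteq> x" for v
    using that unfolding K_def secA by blast
  have split: "concat (map blk ss) = concat (map blk (take j ss)) @ concat (map blk (drop j ss))" for j
    by (metis append_take_drop_id concat_append map_append)
  have "\<exists>A B. cliques T = A @ B \<and> (A \<noteq> [] \<longrightarrow> B \<noteq> [] \<longrightarrow> last A \<inter> hd B \<subseteq> insert y (insert y (K - {x}))) \<and>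
      ((B \<noteq> [] \<and> insert y (K - {x}) - {y} \<subseteq> hd B) \<or> (A \<noteq> [] \<and> insert y (K - {x}) - {y} \<subseteq> last A))"
    using assms(10)
  proof (elim disjE exE conjE)
    fix b assume b1: "1 < b" and b2: "b \<le> lidx ss x" and b3: "sec ss a - {x} \<subseteq> sec ss b"
      and b4: "sec ss (b - 1) \<inter> sec ss b \<subseteq> sec ss a"
    define j where "j = b - 1"
    have j0: "0 < j" and jl: "j < length ss" using b1 b2 la a i unfolding j_def by auto
    define A where "A = pre @ map ((\<union>) U) (concat (map blk (take j ss)))"
    define B where "B = map ((\<union>) U) (concat (map blk (drop j ss))) @ post"
    have LAB: "cliques T = A @ B" unfolding A_def B_def Ldec2 using split[of j] by simp
    from last_take_blk[where f=blk and xs=ss and P=pre and g="(\<union>) U", OF j0 _ blkne'] jl obtain e1 where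
      e1: "A \<noteq> []" "e1 \<in> set (blk (ss!(j-1)))" "last A = U \<union> e1" unfolding A_def by auto
    from hd_drop_blk[where f=blk and xs=ss and P=post and g="(\<union>) U", OF jl blkne[OF jl]] obtain e2 where
      e2: "B \<noteq> []" "e2 \<in> set (blk (ss!j))" "hd B = U \<union> e2" unfolding B_def by auto
    have sb: "sec ss b = fst (ss!j)" unfolding sec_def j_def by simp
    have sb1: "sec ss (b-1) = fst (ss!(j-1))" unfolding sec_def j_def by simp
    have xnot: "x \<notin> sec ss (b-1)"
    proof
      assume xs: "x \<in> sec ss (b-1)"
      have "b - 1 < lidx ss x" using b1 b2 by simp
      then have "\<not> (1 \<le> b - 1 \<and> b - 1 \<le> length ss \<and> x \<in> sec ss (b - 1))"
        unfolding lidx_def by (rule not_less_Least)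
      then show False using xs b1 jl unfolding j_def by simp
    qed
    have h1: "last A \<inter> hd B \<subseteq> insert y (insert y (K - {x}))"
    proof
      fix v assume v: "v \<in> last A \<inter> hd B"
      show "v \<in> insert y (insert y (K - {x}))"
      proof (cases "v \<in> U")
        case True then show ?thesis by (rule inT0U)
      next
        case False
        then have "v \<in> e1" "v \<in> e2" using v e1(3) e2(3) by auto
        from adj[OF j0 jl e1(2) e2(2) this] have "v \<in> sec ss (b-1) \<and> v \<in> sec ss b" using sb sb1 by simp
        then have "v \<in> sec ss a" "v \<noteq> x" using b4 xnot by auto
        then show ?thesis by (rule inT0S)
      qed
    qed
    have h2: "insert y (K - {x}) - {y} \<subseteq> hd B" using Dsub b3 sb blksup[OF e2(2)] e2(3) by blast
    show ?thesis using LAB h1 h2 e2(1) by blast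
  next
    fix b assume b1: "ridx ss x \<le> b" and b2: "b < length ss" and b3: "sec ss a - {x} \<subseteq> sec ss b"
      and b4: "sec ss b \<inter> sec ss (b + 1) \<subseteq> sec ss a"
    have j0: "0 < b" using b1 ar by simp
    define A where "A = pre @ map ((\<union>) U) (concat (map blk (take b ss)))"
    define B where "B = map ((\<union>) U) (concat (map blk (drop b ss))) @ post"
    have LAB: "cliques T = A @ B" unfolding A_def B_def Ldec2 using split[of b] by simp
    from last_take_blk[where f=blk and xs=ss and P=pre and g="(\<union>) U", OF j0 _ blkne'] b2 obtain e1 where
      e1: "A \<noteq> []" "e1 \<in> set (blk (ss!(b-1)))" "last A = U \<union> e1" unfolding A_def by auto
    from hd_drop_blk[where f=blk and xs=ss and P=post and g="(\<union>) U", OF b2 blkne[OF b2]] obtain e2 where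
      e2: "B \<noteq> []" "e2 \<in> set (blk (ss!b))" "hd B = U \<union> e2" unfolding B_def by auto
    have sb: "sec ss b = fst (ss!(b-1))" unfolding sec_def by simp
    have sb1: "sec ss (b+1) = fst (ss!b)" unfolding sec_def by simp
    have xnot: "x \<notin> sec ss (b+1)"
    proof
      assume xs: "x \<in> sec ss (b+1)"
      have "b + 1 \<le> ridx ss x" unfolding ridx_def
        by (rule Greatest_le_nat[of _ _ "length ss"]) (use xs b2 in auto)
      then show False using b1 by simp
    qed
    have h1: "last A \<inter> hd B \<subseteq> insert y (insert y (K - {x}))"
    proof
      fix v assume v: "v \<in> last A \<inter> hd B"
      show "v \<in> insert y (insert y (K - {x}))"
      proof (cases "v \<in> U")
        case True then show ?thesis by (rule inT0U)
      next
        case False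
        then have "v \<in> e1" "v \<in> e2" using v e1(3) e2(3) by auto
        from adj[OF j0 b2 e1(2) e2(2) this] have "v \<in> sec ss b \<and> v \<in> sec ss (b+1)" using sb sb1 by simp
        then have "v \<in> sec ss a" "v \<noteq> x" using b4 xnot by auto
        then show ?thesis by (rule inT0S)
      qed
    qed
    have h2: "insert y (K - {x}) - {y} \<subseteq> last A" using Dsub b3 sb blksup[OF e1(2)] e1(3) by blast
    show ?thesis using LAB h1 h2 e1(1) by blast
  next
    assume b3: "sec ss a - {x} \<subseteq> sec ss 1"
    have l0: "0 < length ss" using i by linarith
    define A where "A = pre"
    define B where "B = map ((\<union>) U) (concat (map blk (drop 0 ss))) @ post"
    have LAB: "cliques T = A @ B" unfolding A_def B_def Ldec2 by simp
    from hd_drop_blk[where f=blk and xs=ss and P=post and g="(\<union>) U", OF l0 blkne[OF l0]] obtain e2 where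
      e2: "B \<noteq> []" "e2 \<in> set (blk (ss!0))" "hd B = U \<union> e2" unfolding B_def by auto
    have sb: "sec ss 1 = fst (ss!0)" unfolding sec_def by simp
    have h1: "A \<noteq> [] \<longrightarrow> B \<noteq> [] \<longrightarrow> last A \<inter> hd B \<subseteq> insert y (insert y (K - {x}))"
    proof (intro impI subsetI)
      fix v assume An: "A \<noteq> []" and v: "v \<in> last A \<inter> hd B"
      show "v \<in> insert y (insert y (K - {x}))"
      proof (cases "v \<in> U")
        case True then show ?thesis by (rule inT0U)
      next
        case False
        then have ve: "v \<in> e2" using v e2(3) by auto
        have "last A \<in> set pre" using An unfolding A_def by simp
        then have "\<exists>C\<in>set pre \<union> set post. v \<in> C" using v by blast
        from notpre[OF this l0 e2(2) ve] show ?thesis ..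
      qed
    qed
    have h2: "insert y (K - {x}) - {y} \<subseteq> hd B" using Dsub b3 sb blksup[OF e2(2)] e2(3) by blast
    show ?thesis using LAB h1 h2 e2(1) by blast
  next
    assume b3: "sec ss a - {x} \<subseteq> sec ss (length ss)"
    have l0: "0 < length ss" using i by linarith
    define A where "A = pre @ map ((\<union>) U) (concat (map blk (take (length ss) ss)))"
    define B where "B = post"
    have LAB: "cliques T = A @ B" unfolding A_def B_def Ldec2 by simp
    from last_take_blk[where f=blk and xs=ss and P=pre and g="(\<union>) U", OF l0 _ blkne'] obtain e1 where
      e1: "A \<noteq> []" "e1 \<in> set (blk (ss!(length ss - 1)))" "last A = U \<union> e1" unfolding A_def by auto
    have l1: "length ss - 1 < length ss" using l0 by simp
    have sb: "sec ss (length ss) = fst (ss!(length ss - 1))" unfolding sec_def by simp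
    have h1: "A \<noteq> [] \<longrightarrow> B \<noteq> [] \<longrightarrow> last A \<inter> hd B \<subseteq> insert y (insert y (K - {x}))"
    proof (intro impI subsetI)
      fix v assume Bn: "B \<noteq> []" and v: "v \<in> last A \<inter> hd B"
      show "v \<in> insert y (insert y (K - {x}))"
      proof (cases "v \<in> U")
        case True then show ?thesis by (rule inT0U)
      next
        case False
        then have ve: "v \<in> e1" using v e1(3) by auto
        have "hd B \<in> set post" using Bn unfolding B_def by simp
        then have "\<exists>C\<in>set pre \<union> set post. v \<in> C" using v by blast
        from notpre[OF this l1 e1(2) ve] show ?thesis ..
      qed
    qed
    have h2: "insert y (K - {x}) - {y} \<subseteq> last A" using Dsub b3 sb blksup[OF e1(2)] e1(3) by blast
    show ?thesis using LAB h1 h2 e1(1) by blast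
  qed
  then obtain A B where AB: "cliques T = A @ B" "A \<noteq> [] \<Longrightarrow> B \<noteq> [] \<Longrightarrow> last A \<inter> hd B \<subseteq> insert y (insert y (K - {x}))"
      "(B \<noteq> [] \<and> insert y (K - {x}) - {y} \<subseteq> hd B) \<or> (A \<noteq> [] \<and> insert y (K - {x}) - {y} \<subseteq> last A)"
    by blast
  show ?thesis using final_step[OF sg cs setL assms(3) xy K1' Kc KV AB] .
qed


end
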